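(* Let $q$ be a prime power, $l\ge1$, $t=q^l$, $G_4(x)=x^t+x^{t-1}+1$, $G_5(x)=x^{t+1}+x^t+x$, and $L_4^*=\{\alpha\in GF(t^2):\ \alpha\neq0,\ G_4(\alpha)\ne0\}$. Then the $q$-ary Goppa codes $\Gamma_5^{(q-1)}=\Gamma(L_4^*,G_5^{q-1})$ and $\Gamma_4^{*(q-1)}=\Gamma(L_4^*,G_4^{q-1})$ have equal parity-check matrices, i.e., they coincide as codes.
   Context: For a set $L=\{\alpha_1,\dots,\alpha_n\}$ of distinct elements of $GF(t^2)$ and $P\in GF(t^2)[x]$ with $P(\alpha_k)\neq0$ for all $k$, the $q$-ary Goppa code is $\Gamma(L,P)=\{c\in GF(q)^n:\ \sum_k c_k\alpha_k^s/P(\alpha_k)=0 \text{ for } s=0,\dots,\deg P-1\}$. *)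

theory Defs
  imports "HOL-Computational_Algebra.Computational_Algebra" "HOL-Library.Cardinality"
begin

definition subfield_GF :: "nat \<Rightarrow> 'a::field set" where
  "subfield_GF q = {x. x ^ q = x}"

definition goppa_code :: "nat \<Rightarrow> 'a::field list \<Rightarrow> 'a poly \<Rightarrow> 'a list set" where
  "goppa_code q L P = {c. length c = length L \<and> set c \<subseteq> subfield_GF q \<and>
     (\<forall>s < degree P. (\<Sum>k < length L. c ! k * (L ! k) ^ s / poly P (L ! k)) = 0)}"

definition G4 :: "nat \<Rightarrow> 'a::field poly" where
  "G4 t = monom 1 t + monom 1 (t - 1) + 1"

definition G5 :: "nat \<Rightarrow> 'a::field poly" where
  "G5 t = monom 1 (t + 1) + monom 1 t + monom 1 1"

definition L4star :: "nat \<Rightarrow> 'a::field set" where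
  "L4star t = {\<alpha>. \<alpha> \<noteq> 0 \<and> poly (G4 t) \<alpha> \<noteq> 0}"

end

theory Submission
  imports Defs "HOL-Number_Theory.Residues"
begin

lemma card_pow_same:
  fixes x :: "'a::{finite,field}"
  shows "x ^ CARD('a) = x"
proof (cases "x = 0")
  case False
  have "x * (\<Prod>y\<in>UNIV-{0}. x * y) = x * x ^ (CARD('a) - 1) * \<Prod>(UNIV-{0})"
    by (simp add: prod.distrib mult_ac)
  also have "x * x ^ (CARD('a) - 1) = x ^ Suc (CARD('a) - 1)"
    by (subst power_Suc) auto
  also have "Suc (CARD('a) - 1) = CARD('a)"
    using finite_UNIV_card_ge_0[where ?'a = 'a] by simp
  also have "(\<Prod>y\<in>UNIV-{0}. x * y) = (\<Prod>y\<in>UNIV-{0}. y)"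
    by (rule prod.reindex_bij_witness[of _ "\<lambda>y. y / x" "\<lambda>y. x * y"]) (use False in auto)
  finally show ?thesis
    by simp
qed (use finite_UNIV_card_ge_0[where ?'a = 'a] in auto)

lemma char_eq:
  assumes "prime p" "CARD('a::{finite,field}) = p ^ m" "m > 0"
  shows "CHAR('a) = p"
proof -
  have pos: "CHAR('a) > 0" by (rule finite_imp_CHAR_pos) simp
  have pr: "prime CHAR('a)" using prime_CHAR_semidom[OF pos] .
  have "CHAR('a) dvd p ^ m" using CHAR_dvd_CARD[where 'a='a] assms(2) by simp
  hence "CHAR('a) dvd p" using pr prime_dvd_power by blast
  thus ?thesis using pr assms(1) primes_dvd_imp_eq by blast
qed

lemma pow_fix_iter:
  fixes x :: "'b::monoid_mult"
  assumes "x ^ q = x" shows "x ^ (q ^ l) = x"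
proof (induction l)
  case (Suc l)
  have "x ^ (q ^ Suc l) = (x ^ q) ^ (q ^ l)" by (simp add: power_mult mult.commute)
  thus ?case using assms Suc by simp
qed simp

lemma sum_poly_lin:
  fixes c :: "nat \<Rightarrow> 'a::field" and a :: "nat \<Rightarrow> 'a" and d :: "'a \<Rightarrow> 'a"
  assumes "\<And>s. s < D \<Longrightarrow> (\<Sum>k<n. c k * (a k ^ s / d (a k))) = 0"
    and "degree H < D"
  shows "(\<Sum>k<n. c k * (poly H (a k) / d (a k))) = 0"
proof -
  have "(\<Sum>k<n. c k * (poly H (a k) / d (a k)))
      = (\<Sum>k<n. \<Sum>i\<le>degree H. Polynomial.coeff H i * (c k * (a k ^ i / d (a k))))"
    by (simp add: poly_altdef sum_divide_distrib sum_distrib_left mult_ac)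
  also have "\<dots> = (\<Sum>i\<le>degree H. Polynomial.coeff H i * (\<Sum>k<n. c k * (a k ^ i / d (a k))))"
    by (simp add: sum.swap[of _ "{..<n}"] sum_distrib_left)
  also have "\<dots> = 0" using assms by simp
  finally show ?thesis .
qed


lemma G4_poly: "poly (G4 t) x = x^t + x^(t-1) + 1"
  by (simp add: G4_def poly_monom)

lemma G4_alt: "G4 t = [:0,1:]^t + [:0,1:]^(t-1) + (1::'a::field poly)"
  by (simp add: G4_def monom_altdef)

lemma G5_eq: "t \<ge> 1 \<Longrightarrow> G5 t = [:0,1:] * (G4 t :: 'a::field poly)"
proof -
  assume "t \<ge> 1"
  then obtain m where m: "t = Suc m" by (cases t) auto
  show ?thesis unfolding G5_def G4_alt by (simp add: m monom_altdef algebra_simps)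
qed

lemma G4_degree: "t \<ge> 2 \<Longrightarrow> degree (G4 t :: 'a::field poly) = t"
proof (rule antisym)
  assume t: "t \<ge> 2"
  show "degree (G4 t :: 'a poly) \<le> t" unfolding G4_def
    by (intro degree_add_le) (auto intro: order.trans[OF degree_monom_le])
  have "Polynomial.coeff (G4 t :: 'a poly) t = 1" using t by (simp add: G4_def coeff_monom)
  thus "t \<le> degree (G4 t :: 'a poly)" by (intro le_degree) simp
qed

lemma G4_nz: "t \<ge> 2 \<Longrightarrow> G4 t \<noteq> (0::'a::field poly)"
  using G4_degree[of t] by (metis degree_0 not_numeral_le_zero)

lemma G4_dvd:
  assumes pr: "prime CHAR('a::field)" and t: "t = CHAR('a) ^ m" and t2: "t \<ge> 2"
  shows "(G4 t :: 'a poly) dvd [:0,1:]^(t*t) - [:0,1:]"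
proof -
  define X where "X = ([:0,1:] :: 'a poly)"
  have prp: "prime CHAR('a poly)" using pr by simp
  have fr: "(a + b) ^ (CHAR('a poly) ^ n) = a ^ (CHAR('a poly) ^ n) + b ^ (CHAR('a poly) ^ n)" for a b :: "'a poly" and n
    using freshmans_dream'[OF prp refl] .
  have frt: "(X + 1) ^ t = X ^ t + 1" using fr[of X 1 m] t by simp
  have frtt: "(X + 1) ^ (t*t) = X ^ (t*t) + 1" using fr[of X 1 "m+m"] t by (simp add: power_add)
  obtain m' where m': "t = Suc m'" using t2 by (cases t) auto
  have xg: "X * G4 t = (X + 1) ^ (t+1) - 1"
    unfolding G4_alt X_def[symmetric] using frt by (simp add: m' algebra_simps)
  have d1: "(X + 1) ^ (t+1) - 1 dvd ((X+1)^(t+1)) ^ (t - 1) - 1"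
    using power_diff_1_eq[of "(X+1)^(t+1)" "t-1"] by (metis dvd_triv_left)
  have e: "(t+1)*(t-1) + 1 = t*t" using t2 m' by simp
  have "((X+1)^(t+1)) ^ (t - 1) - 1 dvd (X+1) * (((X+1)^(t+1)) ^ (t - 1) - 1)" by simp
  also have "(X+1) * (((X+1)^(t+1)) ^ (t - 1) - 1) = (X+1)^(t*t) - (X+1)"
  proof -
    have "((X+1)^(t+1)) ^ (t - 1) = (X+1)^((t+1)*(t-1))" by (simp only: power_mult)
    moreover have "(X+1)^(t*t) = (X+1)^((t+1)*(t-1)) * (X+1)"
      by (simp only: e[symmetric] power_add power_one_right)
    ultimately show ?thesis by (simp only: right_diff_distrib mult.commute mult_1_right mult_1_left)
  qed
  also have "\<dots> = X^(t*t) - X" using frtt by simp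
  finally have "X * G4 t dvd X^(t*t) - X" using xg d1 dvd_trans by metis
  thus ?thesis unfolding X_def using dvd_mult_right by blast
qed


lemma decomp:
  assumes pr: "prime CHAR('a::field)" and t: "t = CHAR('a) ^ m" and t2: "t \<ge> 2"
    and tr: "t = q * r" and q2: "q \<ge> 2" and e: "e < t"
  shows "\<exists>P K. degree P < t \<and> degree K < t*(q-1) \<and> ([:0,1:]::'a poly)^e = K * G4 t + P^q"
proof -
  define X where "X = ([:0,1:] :: 'a poly)"
  define g where "g = (G4 t :: 'a poly)"
  have gnz: "g \<noteq> 0" unfolding g_def using G4_nz t2 by blast
  have dg: "degree g = t" unfolding g_def using G4_degree t2 by blast
  define P where "P = X^(e*t*r) mod g"
  have m1: "X^(t*t) mod g = X mod g"
    using G4_dvd[OF pr t t2] unfolding g_def X_def by (simp add: mod_eq_dvd_iff)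
  have "P^q mod g = (X^(e*t*r))^q mod g" unfolding P_def by (rule power_mod)
  also have "(X^(e*t*r))^q = (X^(t*t))^e"
    by (simp add: tr flip: power_mult) (simp add: mult_ac)
  also have "(X^(t*t))^e mod g = (X^(t*t) mod g)^e mod g" by (simp add: power_mod)
  also have "\<dots> = X^e mod g" by (simp add: m1 power_mod)
  finally have "g dvd P^q - X^e" by (simp add: mod_eq_dvd_iff)
  hence "g dvd X^e - P^q" by (metis dvd_minus_iff minus_diff_eq)
  define K where "K = (X^e - P^q) div g"
  have eq: "X^e = K * g + P^q" unfolding K_def using \<open>g dvd X^e - P^q\<close>
    by (simp add: dvd_div_mult_self)
  have dP: "degree P < t"
    using degree_mod_less[OF gnz, of "X^(e*t*r)"] dg t2 unfolding P_def by auto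
  have dK: "degree K < t*(q-1)"
  proof (cases "K = 0")
    case True thus ?thesis using t2 q2 by simp
  next
    case False
    have "degree (K * g) = degree K + t" using False gnz dg by (simp add: degree_mult_eq)
    moreover have "K * g = X^e - P^q" using eq by simp
    moreover have "degree (X^e - P^q) < t * q"
    proof -
      have "degree (X^e - P^q) \<le> max (degree (X^e)) (degree (P^q))" by (rule degree_diff_le_max)
      moreover have "degree (X^e) = e" unfolding X_def by (simp add: degree_power_eq)
      moreover have "degree (P^q) \<le> degree P * q" by (rule degree_power_le)
      moreover have "degree P * q < t * q" using dP q2 by simp
      moreover have "e < t * q" using e q2 by (metis dual_order.strict_trans1 le_square mult_le_mono2 order.trans nat_le_linear not_less one_le_numeral mult.right_neutral)
      ultimately show ?thesis by linarith
    qed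
    ultimately have "degree K + t < t * q" by simp
    thus ?thesis using q2 by (simp add: algebra_simps)
  qed
  show ?thesis using dP dK eq unfolding X_def g_def by blast
qed


theorem lemma7:
  fixes q l t :: nat and L :: "'a::{finite,field} list"
  assumes "\<exists>p k. prime p \<and> k > 0 \<and> q = p ^ k"
    and "l \<ge> 1"
    and "t = q ^ l"
    and "CARD('a) = t ^ 2"
    and "distinct L" and "set L = L4star t"
  shows "goppa_code q L ((G5 t) ^ (q - 1)) = goppa_code q L ((G4 t) ^ (q - 1))"
proof -
  obtain p k where pk: "prime p" "k > 0" "q = p^k" using assms(1) by blast
  have p2: "p \<ge> 2" using pk(1) prime_ge_2_nat by blast
  have "p ^ 1 \<le> p ^ k" using pk(2) p2 by (intro power_increasing) auto
  hence q2: "q \<ge> 2" using pk p2 by simp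
  obtain l' where l': "l = Suc l'" using assms(2) by (cases l) auto
  have tq: "t = q * q ^ l'" using assms(3) l' by simp
  have qt: "q \<le> t" using tq q2 by simp
  have t2: "t \<ge> 2" using qt q2 by simp
  have qtt: "q \<le> t*t" using qt le_square le_trans by blast
  have tq1: "(t+1)*(q-1) = t*(q-1) + (q-1)" by (simp add: add_mult_distrib)
  have card: "CARD('a) = p ^ (k*l*2)" using assms(3,4) pk(3) by (simp add: power_mult)
  have ch: "CHAR('a) = p" using char_eq[OF pk(1) card] pk(2) assms(2) by simp
  have pr: "prime CHAR('a)" using ch pk(1) by simp
  have tC: "t = CHAR('a) ^ (k*l)" using ch pk(3) assms(3) by (simp add: power_mult)
  have qC: "q = CHAR('a) ^ k" using ch pk(3) by simp
  have fermat: "x ^ (t*t) = x" for x :: 'a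
    using card_pow_same[of x] assms(4) by (simp add: power2_eq_square)
  have frt: "(a + b) ^ t = a ^ t + b ^ t" for a b :: 'a
    using freshmans_dream'[OF pr tC] .
  define g where "g = (\<lambda>x::'a. x^t + x^(t-1) + 1)"
  have pG4: "poly (G4 t) x = g x" for x :: 'a by (simp add: G4_poly g_def)
  have pG4q: "poly (G4 t ^ (q-1)) x = g x ^ (q-1)" for x :: 'a by (simp add: pG4 poly_power)
  have pG5q: "poly (G5 t ^ (q-1)) x = (x * g x) ^ (q-1)" for x :: 'a
    using t2 by (simp add: G5_eq pG4 poly_power)
  have G4nz: "(G4 t :: 'a poly) \<noteq> 0" using G4_nz[of t, where 'a='a] t2 by blast
  have d4: "degree (G4 t ^ (q-1) :: 'a poly) = t*(q-1)"
    using G4nz G4_degree[OF t2, where 'a='a] by (simp add: degree_power_eq)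
  have d5: "degree (G5 t ^ (q-1) :: 'a poly) = (t+1)*(q-1)"
  proof -
    have "degree (G5 t :: 'a poly) = t + 1"
      using t2 G4nz G4_degree[OF t2, where 'a='a] by (simp add: G5_eq degree_mult_eq)
    moreover have "(G5 t :: 'a poly) \<noteq> 0" using t2 G4nz by (simp add: G5_eq)
    ultimately show ?thesis by (simp add: degree_power_eq)
  qed
  have Lnz: "x \<noteq> 0" "g x \<noteq> 0" if "x \<in> set L" for x
    using that assms(6) by (auto simp: L4star_def pG4)
  have x1: "x ^ (t*t - 1) = 1" if "x \<noteq> 0" for x :: 'a
  proof -
    have "t*t = Suc (t*t - 1)" using t2 by (simp add: Suc_diff_1)
    hence "x * x ^ (t*t - 1) = x * 1" using fermat[of x] by (metis mult_1_right power_Suc)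
    thus ?thesis using that by simp
  qed
  have conj: "(g x)^t * x^(t-1) = g x" if "x \<noteq> 0" for x :: 'a
  proof -
    have "(g x)^t = x^(t*t) + (x^(t-1))^t + 1" unfolding g_def
      by (simp add: frt power_mult)
    also have "\<dots> = x + (x^(t-1))^t + 1" by (simp add: fermat)
    finally have a: "(g x)^t = x + (x^(t-1))^t + 1" .
    have "(x^(t-1))^t * x^(t-1) = x^((t-1)*t + (t-1))" by (simp add: power_mult power_add)
    also have "(t-1)*t + (t-1) = t*t - 1" using t2 by (cases t) (auto simp: algebra_simps)
    finally have b: "(x^(t-1))^t * x^(t-1) = 1" using x1[OF that] by simp
    have c: "x * x^(t-1) = x^t" using t2 by (cases t) auto
    show ?thesis unfolding a using b c by (simp add: g_def algebra_simps)
  qed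
  show ?thesis
  proof (rule Set.set_eqI)
    fix c :: "'a list"
    define n where "n = length L"
    show "c \<in> goppa_code q L (G5 t ^ (q - 1)) \<longleftrightarrow> c \<in> goppa_code q L (G4 t ^ (q - 1))"
    proof (cases "length c = n \<and> set c \<subseteq> subfield_GF q")
      case False
      thus ?thesis unfolding goppa_code_def n_def by auto
    next
      case True
      hence lc: "length c = n" and sc: "set c \<subseteq> subfield_GF q" by auto
      have cq: "(c!i)^q = c!i" if "i < n" for i
      proof -
        have "c!i \<in> set c" using that lc by simp
        hence "c!i \<in> subfield_GF q" using sc by blast
        thus ?thesis by (simp add: subfield_GF_def)
      qed
      have ct: "(c!i)^t = c!i" if "i < n" for i
        using pow_fix_iter[OF cq[OF that], of l] assms(3) by simp
      define S where "S = (\<lambda>\<phi>::'a \<Rightarrow> 'a. (\<Sum>i<n. c!i * \<phi> (L!i)))"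
      have Sq: "S \<phi> ^ q = S (\<lambda>x. \<phi> x ^ q)" for \<phi>
      proof -
        have "S \<phi> ^ q = (\<Sum>i<n. (c!i * \<phi> (L!i)) ^ q)"
          unfolding S_def by (rule freshmans_dream_sum'[OF pr qC])
        also have "\<dots> = S (\<lambda>x. \<phi> x ^ q)" unfolding S_def
          by (rule sum.cong) (auto simp: power_mult_distrib cq)
        finally show ?thesis .
      qed
      have St: "S \<phi> ^ t = S (\<lambda>x. \<phi> x ^ t)" for \<phi>
      proof -
        have "S \<phi> ^ t = (\<Sum>i<n. (c!i * \<phi> (L!i)) ^ t)"
          unfolding S_def by (rule freshmans_dream_sum'[OF pr tC])
        also have "\<dots> = S (\<lambda>x. \<phi> x ^ t)" unfolding S_def
          by (rule sum.cong) (auto simp: power_mult_distrib ct)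
        finally show ?thesis .
      qed
      have Sadd: "S (\<lambda>x. a x + b x) = S a + S b" for a b
        unfolding S_def by (simp add: distrib_left sum.distrib)
      have Scong: "S \<phi> = S \<psi>" if "\<And>x. x \<in> set L \<Longrightarrow> \<phi> x = \<psi> x" for \<phi> \<psi>
        unfolding S_def using that n_def by (intro sum.cong) auto
      have A5: "(\<Sum>i<length L. c ! i * (L ! i) ^ s / poly (G5 t ^ (q-1)) (L ! i))
          = S (\<lambda>x. x^s / (x * g x)^(q-1))" for s
        unfolding S_def n_def pG5q by (simp add: times_divide_eq_right)
      have A4: "(\<Sum>i<length L. c ! i * (L ! i) ^ s / poly (G4 t ^ (q-1)) (L ! i))
          = S (\<lambda>x. x^s / (g x)^(q-1))" for s
        unfolding S_def n_def pG4q by (simp add: times_divide_eq_right)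
      have shift: "S (\<lambda>x. x^(s + (q-1)) / (x * g x)^(q-1)) = S (\<lambda>x. x^s / (g x)^(q-1))" for s
        by (rule Scong) (use Lnz in \<open>simp add: power_add power_mult_distrib\<close>)
      have "(\<forall>s<(t+1)*(q-1). S (\<lambda>x. x^s / (x * g x)^(q-1)) = 0)
          \<longleftrightarrow> (\<forall>s<t*(q-1). S (\<lambda>x. x^s / (g x)^(q-1)) = 0)"
      proof
        assume H: "\<forall>s<(t+1)*(q-1). S (\<lambda>x. x^s / (x * g x)^(q-1)) = 0"
        show "\<forall>s<t*(q-1). S (\<lambda>x. x^s / (g x)^(q-1)) = 0"
        proof (intro allI impI)
          fix s assume "s < t*(q-1)"
          hence "s + (q-1) < (t+1)*(q-1)" using tq1 by linarith
          thus "S (\<lambda>x. x^s / (g x)^(q-1)) = 0" using H shift by metis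
        qed
      next
        assume H: "\<forall>s<t*(q-1). S (\<lambda>x. x^s / (g x)^(q-1)) = 0"
        have HP: "S (\<lambda>x. poly H x / (g x)^(q-1)) = 0" if "degree H < t*(q-1)" for H
          unfolding S_def
          by (rule sum_poly_lin[where D="t*(q-1)" and d="\<lambda>x. (g x)^(q-1)"])
             (use H that in \<open>auto simp: S_def\<close>)
        have B: "S (\<lambda>x. x^e / (g x)^q) = 0" if eT: "e < t" for e
        proof -
          obtain P K where PK: "degree P < t" "degree K < t*(q-1)"
            "([:0,1:]::'a poly)^e = K * G4 t + P^q"
            using decomp[OF pr tC t2 tq q2 eT] by blast
          have dPG: "degree (P * G4 t ^ (q-2)) < t*(q-1)"
          proof -
            have "degree (P * G4 t ^ (q-2)) \<le> degree P + degree (G4 t ^ (q-2) :: 'a poly)"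
              by (rule degree_mult_le)
            also have "degree (G4 t ^ (q-2) :: 'a poly) = (q-2)*t"
              using G4nz G4_degree[OF t2, where 'a='a] by (simp add: degree_power_eq)
            finally have dd: "degree (P * G4 t ^ (q-2)) \<le> degree P + (q-2)*t" .
            obtain r where r: "q = Suc (Suc r)" using q2 by (metis add_2_eq_Suc le_Suc_ex)
            have m: "(q-2)*t + t = t*(q-1)" by (simp add: r algebra_simps)
            show ?thesis using dd PK(1) m by linarith
          qed
          have "S (\<lambda>x. x^e / (g x)^q) = S (\<lambda>x. poly K x / (g x)^(q-1)
                 + (poly (P * G4 t ^ (q-2)) x / (g x)^(q-1)) ^ q)"
          proof (rule Scong)
            fix x assume xL: "x \<in> set L"
            have ex: "x^e = poly K x * g x + (poly P x)^q"
              using arg_cong[OF PK(3), of "\<lambda>p. poly p x"] by (simp add: poly_power pG4)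
            obtain r where r: "q = Suc (Suc r)" using q2 by (metis add_2_eq_Suc le_Suc_ex)
            have gx: "g x \<noteq> 0" using Lnz xL by auto
            show "x^e / (g x)^q = poly K x / (g x)^(q-1)
                 + (poly (P * G4 t ^ (q-2)) x / (g x)^(q-1)) ^ q"
              unfolding ex using gx by (simp add: r pG4 poly_power field_simps)
          qed
          also have "\<dots> = 0" using Sadd HP[OF PK(2)] HP[OF dPG] Sq[symmetric] q2 by simp
          finally show ?thesis .
        qed
        show "\<forall>s<(t+1)*(q-1). S (\<lambda>x. x^s / (x * g x)^(q-1)) = 0"
        proof (intro allI impI)
          fix s assume s: "s < (t+1)*(q-1)"
          consider "s \<ge> q-1" | "s = 0" | "0 < s \<and> s < q-1" by linarith
          thus "S (\<lambda>x. x^s / (x * g x)^(q-1)) = 0"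
          proof cases
            case 1
            then obtain s' where s': "s = s' + (q-1)" using le_Suc_ex by (metis add.commute)
            have "s' < t*(q-1)" using s s' tq1 by linarith
            thus ?thesis using H shift s' by metis
          next
            case 2
            have "S (\<lambda>x. x^s / (x * g x)^(q-1)) = S (\<lambda>x. (x^(t-q+1) / (g x)^q + x^(t-q) / (g x)^q)
                 + (x^(t-q) / (g x)^q) ^ t)"
            proof (rule Scong)
              fix x assume xL: "x \<in> set L"
              have x0: "x \<noteq> 0" and gx: "g x \<noteq> 0" using Lnz xL by auto
              define y where "y = x^(t-1)"
              have y0: "y \<noteq> 0" using x0 by (simp add: y_def)
              have gt: "(g x)^t = g x / y" using conj[OF x0] y0 by (simp add: y_def field_simps)
              have ex: "(t-q)*t + (t-1)*q + (q-1) = t*t - 1"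
                using qt q2 t2 qtt by (simp add: algebra_simps diff_mult_distrib diff_mult_distrib2)
              have z: "x^((t-q)*t) * y^q * x^(q-1) = 1"
              proof -
                have "x^((t-q)*t) * y^q * x^(q-1) = x^((t-q)*t + (t-1)*q + (q-1))"
                  by (simp add: y_def power_add power_mult)
                also have "\<dots> = 1" by (simp only: ex x1[OF x0])
                finally show ?thesis .
              qed
              have gq': "((g x)^q)^t = (g x)^q / y^q"
              proof -
                have "((g x)^q)^t = ((g x)^t)^q" by (simp only: power_mult[symmetric] mult.commute)
                thus ?thesis by (simp add: gt power_divide)
              qed
              have "(x^(t-q) / (g x)^q) ^ t = (x^(t-q))^t / ((g x)^q)^t" by (rule power_divide)
              also have "\<dots> = x^((t-q)*t) / ((g x)^q / y^q)" by (simp only: gq' power_mult)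
              also have "\<dots> = x^((t-q)*t) * y^q / (g x)^q" by (simp add: divide_divide_eq_right)
              also have "\<dots> = 1 / (x^(q-1) * (g x)^q)" using z x0 gx
                by (simp add: field_simps)
              finally have T: "(x^(t-q) / (g x)^q) ^ t = 1 / (x^(q-1) * (g x)^q)" .
              have "t-q+1+(q-1) = t" using qt q2 by simp
              hence e1: "x^(t-q+1) * x^(q-1) = x^t" by (metis power_add)
              have "t-q+(q-1) = t-1" using qt q2 by simp
              hence e2: "x^(t-q) * x^(q-1) = x^(t-1)" by (metis power_add)
              have gq: "(g x)^q = g x * (g x)^(q-1)" using q2 by (cases q) auto
              have "x^(t-q+1) / (g x)^q + x^(t-q) / (g x)^q + 1 / (x^(q-1) * (g x)^q)
                    = (x^(t-q+1) * x^(q-1) + x^(t-q) * x^(q-1) + 1) / (x^(q-1) * (g x)^q)"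
                using x0 gx by (simp add: field_simps)
              also have "\<dots> = g x / (x^(q-1) * (g x)^q)" by (simp only: e1 e2 g_def)
              also have "\<dots> = 1 / (x * g x)^(q-1)" using gx x0 by (simp add: gq power_mult_distrib)
              finally show "x^s / (x * g x)^(q-1) = (x^(t-q+1) / (g x)^q + x^(t-q) / (g x)^q)
                 + (x^(t-q) / (g x)^q) ^ t" using T 2 by simp
            qed
            also have "\<dots> = 0"
              using Sadd B[of "t-q+1"] B[of "t-q"] St[symmetric] qt q2 t2 by simp
            finally show ?thesis .
          next
            case 3
            define e' where "e' = t*s - (q-1)"
            have "t \<le> t*s" using 3 by simp
            hence ts: "t*s \<ge> q-1" using qt by linarith
            have e'lt: "e' < t*(q-1)"
            proof -
              have "t*s < t*(q-1)" using 3 t2 by simp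
              thus ?thesis unfolding e'_def by linarith
            qed
            have "S (\<lambda>x. x^s / (x * g x)^(q-1)) = S (\<lambda>x. (x^e' / (g x)^(q-1)) ^ t)"
            proof (rule Scong)
              fix x assume xL: "x \<in> set L"
              have x0: "x \<noteq> 0" and gx: "g x \<noteq> 0" using Lnz xL by auto
              define y where "y = x^(t-1)"
              have y0: "y \<noteq> 0" using x0 by (simp add: y_def)
              have gt: "(g x)^t = g x / y" using conj[OF x0] y0 by (simp add: y_def field_simps)
              have ex: "e'*t + (t-1)*(q-1) + (q-1) = t*t*s"
              proof -
                have "e' + (q-1) = t*s" using ts unfolding e'_def by simp
                hence "e'*t + (q-1)*t = t*t*s" by (metis add_mult_distrib mult.commute mult.left_commute)
                moreover have "(t-1)*a + a = a*t" for a :: nat using t2 by (cases t) (auto simp: algebra_simps)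
                hence "(t-1)*(q-1) + (q-1) = (q-1)*t" .
                ultimately show ?thesis by simp
              qed
              have z: "x^(e'*t) * y^(q-1) * x^(q-1) = x^s"
              proof -
                have "x^(e'*t) * y^(q-1) * x^(q-1) = x^(e'*t + (t-1)*(q-1) + (q-1))"
                  by (simp add: y_def power_add power_mult)
                also have "\<dots> = x^(t*t*s)" by (simp only: ex)
                also have "\<dots> = (x^(t*t))^s" by (simp only: power_mult)
                also have "\<dots> = x^s" by (simp only: fermat)
                finally show ?thesis .
              qed
              have gq': "((g x)^(q-1))^t = (g x)^(q-1) / y^(q-1)"
              proof -
                have "((g x)^(q-1))^t = ((g x)^t)^(q-1)" by (simp only: power_mult[symmetric] mult.commute)
                thus ?thesis by (simp add: gt power_divide)
              qed
              have "(x^e' / (g x)^(q-1)) ^ t = (x^e')^t / ((g x)^(q-1))^t" by (rule power_divide)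
              also have "\<dots> = x^(e'*t) / ((g x)^(q-1) / y^(q-1))" by (simp only: gq' power_mult)
              also have "\<dots> = x^(e'*t) * y^(q-1) / (g x)^(q-1)" by (simp add: divide_divide_eq_right)
              also have "\<dots> = x^s / (x * g x)^(q-1)" using z x0 gx
                by (simp add: field_simps power_mult_distrib)
              finally show "x^s / (x * g x)^(q-1) = (x^e' / (g x)^(q-1)) ^ t" by simp
            qed
            also have "\<dots> = 0" using St[symmetric] H e'lt t2 by simp
            finally show ?thesis .
          qed
        qed
      qed
      thus ?thesis unfolding goppa_code_def mem_Collect_eq d4 d5 A4 A5 using lc sc n_def by auto
    qed
  qed
qed

end
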